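(* For all $\vec z,\vec a\in\mathbb{C}^n$ (with $d_{\tan}$ possibly $+\infty$), \[ \tfrac12\big\||\pi_{\vec z}\rangle\langle\pi_{\vec z}|-|\pi_{\vec a}\rangle\langle\pi_{\vec a}|\big\|_1=\big\||\pi_{\vec z}\rangle\langle\pi_{\vec z}|-|\pi_{\vec a}\rangle\langle\pi_{\vec a}|\big\|_{\mathrm{op}}\le d_{\tan}(|\pi_{\vec z}\rangle,|\pi_{\vec a}\rangle). \]
   Context: For $\vec z\in\mathbb{C}^n$, $|\pi_{\vec z}\rangle=\bigotimes_{i=1}^n \frac{|0\rangle+z_i|1\rangle}{\sqrt{1+|z_i|^2}}$; the tangent distance is $d_{\tan}(|\pi_{\vec z}\rangle,|\pi_{\vec a}\rangle)=\big(\sum_{i=1}^n|\frac{z_i-a_i}{1+z_i^*a_i}|^2\big)^{1/2}$ (a summand with vanishing denominator is $+\infty$). $\|\cdot\|_1$ is the trace norm and $\|\cdot\|_{\mathrm{op}}$ the operator norm. *)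

theory Defs
  imports "Jordan_Normal_Form.Char_Poly" "HOL-Library.Extended_Real"
begin

definition cvec_norm :: "complex vec \<Rightarrow> real" where
  "cvec_norm x = sqrt (\<Sum>i<dim_vec x. (cmod (x $ i))\<^sup>2)"

definition cadj :: "complex mat \<Rightarrow> complex mat" where
  "cadj A = mat (dim_col A) (dim_row A) (\<lambda>(i,j). cnj (A $$ (j,i)))"

definition op_norm :: "complex mat \<Rightarrow> real" where
  "op_norm A = Sup {cvec_norm (A *\<^sub>v x) | x. x \<in> carrier_vec (dim_col A) \<and> cvec_norm x = 1}"

text \<open>Trace norm: sum of singular values, i.e. of square roots of the eigenvalues
  (with algebraic multiplicity) of the positive semidefinite matrix A^* A.\<close>
definition trace_norm :: "complex mat \<Rightarrow> real" where
  "trace_norm A = sum_mset (image_mset (\<lambda>\<mu>. sqrt (Re \<mu>)) (proots (char_poly (cadj A * A))))"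

text \<open>Product state |pi_z> in (C^2)^{\<otimes> n}, n = length z; basis index j < 2^n,
  where bit i of j is the state of qubit i.\<close>
definition prod_state :: "complex list \<Rightarrow> complex vec" where
  "prod_state z = vec (2 ^ length z)
     (\<lambda>j. \<Prod>i<length z. (if bit j i then z ! i else 1) / complex_of_real (sqrt (1 + (cmod (z ! i))\<^sup>2)))"

definition proj :: "complex vec \<Rightarrow> complex mat" where
  "proj v = mat (dim_vec v) (dim_vec v) (\<lambda>(i,j). v $ i * cnj (v $ j))"

definition d_tan :: "complex list \<Rightarrow> complex list \<Rightarrow> ereal" where
  "d_tan z a = (if \<exists>i<length z. 1 + cnj (z ! i) * a ! i = 0 then \<infinity>
     else ereal (sqrt (\<Sum>i<length z. (cmod ((z ! i - a ! i) / (1 + cnj (z ! i) * a ! i)))\<^sup>2)))"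

end

theory Submission
  imports Defs "Jordan_Normal_Form.Jordan_Normal_Form_Existence" "HOL-Analysis.L2_Norm"
begin


lemma sum_double_split:
  fixes h :: "nat \<Rightarrow> 'a::comm_monoid_add"
  shows "(\<Sum>j<2*m. h j) = (\<Sum>k<m. h (2*k) + h (2*k+1))"
  by (induction m) (auto simp: add.assoc)

lemma bit_sum_prod:
  fixes g :: "nat \<Rightarrow> bool \<Rightarrow> 'a::comm_semiring_1"
  shows "(\<Sum>j::nat<2^n. \<Prod>i<n. g i (bit j i)) = (\<Prod>i<n. g i False + g i True)"
proof (induction n arbitrary: g)
  case 0
  then show ?case by simp
next
  case (Suc n)
  have e1: "bit (2*k) (Suc i) = bit k i" "bit (2*k+1) (Suc i) = bit k i" "bit (Suc (2*k)) (Suc i) = bit k i" for k i :: nat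
    by (simp_all add: bit_Suc)
  have e0: "\<not> bit (2*k) 0" "bit (2*k+1) 0" "bit (Suc (2*k)) 0" for k :: nat by (simp_all add: bit_0)
  have "(\<Sum>j::nat<2^Suc n. \<Prod>i<Suc n. g i (bit j i))
      = (\<Sum>k::nat<2^n. (\<Prod>i<Suc n. g i (bit (2*k) i)) + (\<Prod>i<Suc n. g i (bit (2*k+1) i)))"
    by (simp add: sum_double_split del: prod.lessThan_Suc)
  also have "\<dots> = (\<Sum>k::nat<2^n. (g 0 False + g 0 True) * (\<Prod>i<n. g (Suc i) (bit k i)))"
    by (simp add: prod.lessThan_Suc_shift e0 e1 distrib_right del: prod.lessThan_Suc)
  also have "\<dots> = (g 0 False + g 0 True) * (\<Prod>i<n. g (Suc i) False + g (Suc i) True)"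
    by (simp add: sum_distrib_left[symmetric] Suc.IH[of "\<lambda>i. g (Suc i)"])
  also have "\<dots> = (\<Prod>i<Suc n. g i False + g i True)"
    by (simp add: prod.lessThan_Suc_shift del: prod.lessThan_Suc)
  finally show ?case .
qed




definition ip :: "complex vec \<Rightarrow> complex vec \<Rightarrow> complex" where
  "ip x y = (\<Sum>i<dim_vec x. cnj (x$i) * y$i)"

lemma ip_lin2:
  assumes "x \<in> carrier_vec N" "u \<in> carrier_vec N" "v \<in> carrier_vec N"
  shows "ip x (vec N (\<lambda>i. a * u$i - b * v$i)) = a * ip x u - b * ip x v"
proof -
  have "ip x (vec N (\<lambda>i. a * u$i - b * v$i)) = (\<Sum>i<N. a * (cnj (x$i) * u$i) - b * (cnj (x$i) * v$i))"
    using assms by (auto simp: ip_def algebra_simps intro!: sum.cong)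
  also have "\<dots> = a * ip x u - b * ip x v"
    using assms by (simp add: ip_def sum_subtractf sum_distrib_left)
  finally show ?thesis .
qed

lemma ip_lin1:
  assumes "y \<in> carrier_vec N" "u \<in> carrier_vec N" "v \<in> carrier_vec N"
  shows "ip (vec N (\<lambda>i. a * u$i - b * v$i)) y = cnj a * ip u y - cnj b * ip v y"
proof -
  have "ip (vec N (\<lambda>i. a * u$i - b * v$i)) y = (\<Sum>i<N. cnj a * (cnj (u$i) * y$i) - cnj b * (cnj (v$i) * y$i))"
    using assms by (auto simp: ip_def algebra_simps intro!: sum.cong)
  also have "\<dots> = cnj a * ip u y - cnj b * ip v y"
    using assms by (simp add: ip_def sum_subtractf sum_distrib_left)
  finally show ?thesis .
qed

lemma ip_cnj:
  assumes "dim_vec x = dim_vec y"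
  shows "ip x y = cnj (ip y x)"
  using assms unfolding ip_def by (simp add: mult.commute)

lemma ip_self: "ip x x = of_real ((cvec_norm x)^2)"
proof -
  have "ip x x = (\<Sum>i<dim_vec x. of_real ((cmod (x$i))^2))"
    unfolding ip_def
  proof (intro sum.cong refl)
    fix i show "cnj (x$i) * x$i = of_real ((cmod (x$i))^2)"
      by (subst complex_norm_square) (simp add: mult.commute)
  qed
  also have "\<dots> = of_real ((cvec_norm x)^2)"
    unfolding cvec_norm_def by (simp add: sum_nonneg)
  finally show ?thesis .
qed

lemma cvec_norm_nonneg: "cvec_norm x \<ge> 0"
  unfolding cvec_norm_def by (simp add: sum_nonneg)

lemma ip_CS:
  assumes "dim_vec x = dim_vec y"
  shows "cmod (ip x y) \<le> cvec_norm x * cvec_norm y"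
proof -
  have "cmod (ip x y) \<le> (\<Sum>i<dim_vec x. cmod (cnj (x$i) * y$i))"
    unfolding ip_def by (rule norm_sum)
  also have "\<dots> = (\<Sum>i<dim_vec x. \<bar>cmod (x$i)\<bar> * \<bar>cmod (y$i)\<bar>)"
    by (simp add: norm_mult)
  also have "\<dots> \<le> L2_set (\<lambda>i. cmod (x$i)) {..<dim_vec x} * L2_set (\<lambda>i. cmod (y$i)) {..<dim_vec x}"
    by (rule L2_set_mult_ineq)
  also have "\<dots> = cvec_norm x * cvec_norm y"
    using assms by (simp add: L2_set_def cvec_norm_def)
  finally show ?thesis .
qed




definition tr :: "complex mat \<Rightarrow> complex" where
  "tr A = (\<Sum>i<dim_row A. A$$(i,i))"

lemma tr_comm:
  assumes A: "A \<in> carrier_mat n m" and B: "B \<in> carrier_mat m n"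
  shows "tr (A * B) = tr (B * A)"
proof -
  have "tr (A*B) = (\<Sum>i<n. \<Sum>k<m. A$$(i,k) * B$$(k,i))"
    using A B by (simp add: tr_def scalar_prod_def atLeast0LessThan)
  also have "\<dots> = (\<Sum>k<m. \<Sum>i<n. B$$(k,i) * A$$(i,k))"
    by (subst sum.swap) (simp add: mult.commute)
  also have "\<dots> = tr (B*A)"
    using A B by (simp add: tr_def scalar_prod_def atLeast0LessThan)
  finally show ?thesis .
qed

lemma tr_similar:
  assumes "similar_mat A B" shows "tr A = tr B"
proof -
  from similar_matD[OF assms] obtain n P Q where
    c: "{A,B,P,Q} \<subseteq> carrier_mat n n" and PQ: "P * Q = 1\<^sub>m n" and QP: "Q * P = 1\<^sub>m n"
    and A: "A = P * B * Q" by blast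
  have cA: "A \<in> carrier_mat n n" and cB: "B \<in> carrier_mat n n" and cP: "P \<in> carrier_mat n n"
    and cQ: "Q \<in> carrier_mat n n" using c by auto
  have "tr A = tr ((P * B) * Q)" using A by simp
  also have "\<dots> = tr (Q * (P * B))" by (rule tr_comm) (use cP cB cQ in auto)
  also have "Q * (P * B) = (Q * P) * B" using cP cB cQ by (simp add: assoc_mult_mat)
  also have "\<dots> = B" using QP cB by simp
  finally show ?thesis .
qed

lemma tr_diag: "tr A = sum_list (diag_mat A)"
  by (simp add: tr_def diag_mat_def sum_set_upt_conv_sum_list_nat[symmetric] atLeast0LessThan)

lemma cancel_aux: "(x::complex) * r = 2 * r \<Longrightarrow> r \<noteq> 0 \<Longrightarrow> x = of_nat 2"
  by simp

lemma count_sum: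
  assumes "set L \<subseteq> {0, x}" and "g 0 = 0"
  shows "sum_list (map g L) = of_nat (length (filter (\<lambda>y. y = x) L)) * g x"
  using assms by (induction L) (auto simp: algebra_simps)

lemma proots_lin: "proots (\<Prod>a\<leftarrow>L. [:- a, 1:]) = mset (L :: complex list)"
proof (induction L)
  case Nil thus ?case by simp
next
  case (Cons a L)
  have nz: "(\<Prod>a\<leftarrow>L. [:- a, 1:]) \<noteq> (0::complex poly)"
    by (auto simp: prod_list_zero_iff)
  have "proots (\<Prod>a\<leftarrow>a # L. [:- a, 1:]) = proots [:- a, 1:] + proots (\<Prod>a\<leftarrow>L. [:- a, 1:])"
  proof -
    have "(\<Prod>a\<leftarrow>a # L. [:- a, 1:]) = [:- a, 1:] * (\<Prod>a\<leftarrow>L. [:- a, 1:])"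
      by (simp only: list.map prod_list.Cons)
    thus ?thesis using proots_mult[of "[:- a, 1:]" "\<Prod>a\<leftarrow>L. [:- a, 1:]"] nz by simp
  qed
  also have "proots [:- a, 1:] = {#a#}" using proots_linear_factor[of "-a"] by simp
  finally show ?case using Cons by simp
qed

context
  fixes N :: nat and u v :: "complex vec"
  assumes u: "u \<in> carrier_vec N" and v: "v \<in> carrier_vec N"
    and uu: "ip u u = 1" and vv: "ip v v = 1"
begin

abbreviation "DD \<equiv> proj u - proj v"
abbreviation "cc \<equiv> ip u v"
abbreviation "ss \<equiv> 1 - (cmod (ip u v))^2"

lemma dims: "dim_vec u = N" "dim_vec v = N" using u v by auto

lemma D_carrier: "DD \<in> carrier_mat N N" using u v by (auto simp: proj_def)

lemma D_idx: "i < N \<Longrightarrow> j < N \<Longrightarrow> DD $$ (i,j) = u$i * cnj (u$j) - v$i * cnj (v$j)"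
  using u v by (simp add: proj_def)

lemma vu: "ip v u = cnj cc" using ip_cnj[of v u] dims by simp

lemma D_mult:
  assumes y: "y \<in> carrier_vec N"
  shows "DD *\<^sub>v y = vec N (\<lambda>i. ip u y * u$i - ip v y * v$i)"
proof (rule eq_vecI)
  show "dim_vec (DD *\<^sub>v y) = dim_vec (vec N (\<lambda>i. ip u y * u$i - ip v y * v$i))"
    using u v by (simp add: proj_def)
  fix i assume "i < dim_vec (vec N (\<lambda>i. ip u y * u$i - ip v y * v$i))"
  hence i: "i < N" by simp
  have "(DD *\<^sub>v y) $ i = (\<Sum>j<N. DD $$ (i,j) * y $ j)"
  proof -
    have dr: "dim_row DD = N" "dim_col DD = N" using D_carrier by auto
    show ?thesis using i y dr
      by (subst index_mult_mat_vec) (auto simp: scalar_prod_def atLeast0LessThan)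
  qed
  also have "\<dots> = (\<Sum>j<N. u$i * (cnj (u$j) * y$j) - v$i * (cnj (v$j) * y$j))"
    using i by (intro sum.cong) (auto simp: D_idx algebra_simps)
  also have "\<dots> = ip u y * u$i - ip v y * v$i"
    by (simp add: sum_subtractf sum_distrib_left[symmetric] ip_def dims mult.commute)
  finally show "(DD *\<^sub>v y) $ i = vec N (\<lambda>i. ip u y * u$i - ip v y * v$i) $ i" using i by simp
qed

lemma Dy_carrier: "y \<in> carrier_vec N \<Longrightarrow> DD *\<^sub>v y \<in> carrier_vec N"
  using D_carrier by auto

lemma alpha_D: "y \<in> carrier_vec N \<Longrightarrow> ip u (DD *\<^sub>v y) = ip u y - ip v y * cc"
  by (simp add: D_mult ip_lin2[OF u u v] uu)

lemma beta_D: "y \<in> carrier_vec N \<Longrightarrow> ip v (DD *\<^sub>v y) = ip u y * cnj cc - ip v y"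
  by (simp add: D_mult ip_lin2[OF v u v] vv vu)

lemma ip_DD: "y \<in> carrier_vec N \<Longrightarrow> ip (DD *\<^sub>v y) (DD *\<^sub>v y) = cnj (ip u y) * ip u (DD *\<^sub>v y) - cnj (ip v y) * ip v (DD *\<^sub>v y)"
  by (subst (1) D_mult) (auto simp: ip_lin1[OF Dy_carrier u v])

lemma ip_yDDy: "y \<in> carrier_vec N \<Longrightarrow> ip y (DD *\<^sub>v (DD *\<^sub>v y)) = ip (DD *\<^sub>v y) (DD *\<^sub>v y)"
  apply (subst (1) D_mult[OF Dy_carrier], assumption)
  apply (subst ip_lin2[OF _ u v], assumption)
  apply (simp add: ip_DD ip_cnj[of y u] ip_cnj[of y v] dims mult.commute)
  done

lemma cc_sq: "complex_of_real ss = 1 - cc * cnj cc"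
  by (simp add: complex_norm_square[symmetric])

lemma cc_sq2: "(complex_of_real (cmod cc))^2 = cc * cnj cc"
  by (metis complex_norm_square of_real_power)

lemma alpha_DD: "y \<in> carrier_vec N \<Longrightarrow> ip u (DD *\<^sub>v (DD *\<^sub>v y)) = of_real ss * ip u y"
  by (simp add: alpha_D beta_D Dy_carrier cc_sq cc_sq2 algebra_simps)

lemma beta_DD: "y \<in> carrier_vec N \<Longrightarrow> ip v (DD *\<^sub>v (DD *\<^sub>v y)) = of_real ss * ip v y"
  by (simp add: alpha_D beta_D Dy_carrier cc_sq cc_sq2 algebra_simps)

lemma DDD: assumes y: "y \<in> carrier_vec N"
  shows "DD *\<^sub>v (DD *\<^sub>v (DD *\<^sub>v y)) = of_real ss \<cdot>\<^sub>v (DD *\<^sub>v y)"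
proof -
  have "DD *\<^sub>v (DD *\<^sub>v (DD *\<^sub>v y)) = vec N (\<lambda>i. ip u (DD *\<^sub>v (DD *\<^sub>v y)) * u$i - ip v (DD *\<^sub>v (DD *\<^sub>v y)) * v$i)"
    by (rule D_mult[OF Dy_carrier[OF Dy_carrier[OF y]]])
  also have "\<dots> = vec N (\<lambda>i. of_real ss * (ip u y * u$i - ip v y * v$i))"
    by (simp only: alpha_DD[OF y] beta_DD[OF y] right_diff_distrib mult.assoc)
  also have "\<dots> = of_real ss \<cdot>\<^sub>v (DD *\<^sub>v y)"
    by (rule eq_vecI) (auto simp: D_mult[OF y])
  finally show ?thesis .
qed

lemma norm_DD: "y \<in> carrier_vec N \<Longrightarrow> (cvec_norm (DD *\<^sub>v (DD *\<^sub>v y)))^2 = ss * (cvec_norm (DD *\<^sub>v y))^2"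
proof -
  assume y: "y \<in> carrier_vec N"
  have "of_real ((cvec_norm (DD *\<^sub>v (DD *\<^sub>v y)))^2) = ip (DD *\<^sub>v (DD *\<^sub>v y)) (DD *\<^sub>v (DD *\<^sub>v y))"
    by (simp add: ip_self)
  also have "\<dots> = of_real ss * cnj (ip (DD *\<^sub>v y) (DD *\<^sub>v y))"
    using y by (simp add: ip_DD Dy_carrier alpha_DD beta_DD algebra_simps)
  also have "\<dots> = of_real (ss * (cvec_norm (DD *\<^sub>v y))^2)"
    by (simp add: ip_self)
  finally show ?thesis using of_real_eq_iff by blast
qed

lemma norm_u: "cvec_norm u = 1"
proof -
  have "of_real ((cvec_norm u)^2) = (1::complex)" using uu ip_self by metis
  hence "(cvec_norm u)^2 = 1" using of_real_eq_1_iff by blast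
  thus ?thesis using cvec_norm_nonneg[of u] by (simp add: power2_eq_1_iff)
qed

lemma norm_v: "cvec_norm v = 1"
proof -
  have "of_real ((cvec_norm v)^2) = (1::complex)" using vv ip_self by metis
  hence "(cvec_norm v)^2 = 1" using of_real_eq_1_iff by blast
  thus ?thesis using cvec_norm_nonneg[of v] by (simp add: power2_eq_1_iff)
qed

lemma ss_nonneg: "ss \<ge> 0"
proof -
  have "cmod cc \<le> 1" using ip_CS[of u v] dims norm_u norm_v by simp
  hence "(cmod cc)^2 \<le> 1" by (simp add: power_le_one)
  thus ?thesis by simp
qed

lemma norm_Du: "cvec_norm (DD *\<^sub>v u) = sqrt ss"
proof -
  have "of_real ((cvec_norm (DD *\<^sub>v u))^2) = ip (DD *\<^sub>v u) (DD *\<^sub>v u)" by (simp add: ip_self)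
  also have "\<dots> = of_real ss"
    using u by (simp add: ip_DD alpha_D beta_D uu vu cc_sq cc_sq2 algebra_simps)
  finally have "(cvec_norm (DD *\<^sub>v u))^2 = ss" using of_real_eq_iff by blast
  thus ?thesis using cvec_norm_nonneg by (metis real_sqrt_unique)
qed

lemma norm_D_le:
  assumes x: "x \<in> carrier_vec N" and nx: "cvec_norm x = 1"
  shows "cvec_norm (DD *\<^sub>v x) \<le> sqrt ss"
proof -
  let ?w = "DD *\<^sub>v x"
  have w: "?w \<in> carrier_vec N" using Dy_carrier x .
  have nDw: "cvec_norm (DD *\<^sub>v ?w) = sqrt ss * cvec_norm ?w"
  proof -
    have "(cvec_norm (DD *\<^sub>v ?w))^2 = ss * (cvec_norm ?w)^2" using norm_DD x by simp
    hence "cvec_norm (DD *\<^sub>v ?w) = sqrt (ss * (cvec_norm ?w)^2)"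
      using cvec_norm_nonneg by (metis real_sqrt_unique)
    thus ?thesis by (simp add: real_sqrt_mult cvec_norm_nonneg)
  qed
  have "of_real ((cvec_norm ?w)^2) = ip x (DD *\<^sub>v ?w)" using ip_yDDy[OF x] by (simp add: ip_self)
  hence "(cvec_norm ?w)^2 = cmod (ip x (DD *\<^sub>v ?w))"
    by (metis norm_of_real abs_of_nonneg zero_le_power2)
  also have "\<dots> \<le> cvec_norm x * cvec_norm (DD *\<^sub>v ?w)"
    by (rule ip_CS) (use x D_carrier in auto)
  also have "\<dots> = sqrt ss * cvec_norm ?w" using nx nDw by simp
  finally have le: "(cvec_norm ?w)^2 \<le> sqrt ss * cvec_norm ?w" .
  show ?thesis
  proof (cases "cvec_norm ?w = 0")
    case True thus ?thesis using ss_nonneg by simp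
  next
    case False
    hence "cvec_norm ?w > 0" using cvec_norm_nonneg[of ?w] by simp
    with le show ?thesis by (simp add: power2_eq_square)
  qed
qed

lemma op_norm_D: "op_norm DD = sqrt ss"
  unfolding op_norm_def
proof (rule cSup_eq_maximum)
  show "sqrt ss \<in> {cvec_norm (DD *\<^sub>v x) |x. x \<in> carrier_vec (dim_col DD) \<and> cvec_norm x = 1}"
    using norm_Du norm_u u D_carrier by force
  show "\<And>y. y \<in> {cvec_norm (DD *\<^sub>v x) |x. x \<in> carrier_vec (dim_col DD) \<and> cvec_norm x = 1} \<Longrightarrow> y \<le> sqrt ss"
    using norm_D_le D_carrier by auto
qed


lemma cadj_D: "cadj DD = DD"
  by (rule eq_matI) (use u v in \<open>auto simp: cadj_def proj_def\<close>)

lemma tr_DD: "tr (DD * DD) = 2 * of_real ss"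
proof -
  have dr: "dim_row DD = N" "dim_col DD = N" using D_carrier by auto
  have row: "(DD * DD) $$ (i,i) = u$i * cnj (u$i) - u$i * cnj (v$i) * cc - v$i * cnj (u$i) * cnj cc + v$i * cnj (v$i)"
    if i: "i < N" for i
  proof -
    have "(DD * DD) $$ (i,i) = (\<Sum>k<N. DD $$ (i,k) * DD $$ (k,i))"
      using i dr by (simp add: scalar_prod_def atLeast0LessThan)
    also have "\<dots> = (\<Sum>k<N. u$i * cnj (u$i) * (cnj (u$k) * u$k) - u$i * cnj (v$i) * (cnj (u$k) * v$k)
        - v$i * cnj (u$i) * (cnj (v$k) * u$k) + v$i * cnj (v$i) * (cnj (v$k) * v$k))"
      using i by (intro sum.cong) (auto simp: D_idx algebra_simps)
    also have "\<dots> = u$i * cnj (u$i) * ip u u - u$i * cnj (v$i) * ip u v - v$i * cnj (u$i) * ip v u + v$i * cnj (v$i) * ip v v"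
      by (simp add: sum.distrib sum_subtractf sum_distrib_left ip_def dims)
    finally show ?thesis by (simp add: uu vv vu)
  qed
  have "tr (DD * DD) = (\<Sum>i<N. u$i * cnj (u$i) - u$i * cnj (v$i) * cc - v$i * cnj (u$i) * cnj cc + v$i * cnj (v$i))"
    using dr row by (simp add: tr_def)
  also have "\<dots> = (\<Sum>i<N. cnj (u$i) * u$i) - (\<Sum>i<N. cnj (v$i) * u$i) * cc - (\<Sum>i<N. cnj (u$i) * v$i) * cnj cc + (\<Sum>i<N. cnj (v$i) * v$i)"
    apply (subst sum.cong[OF refl, where h = "\<lambda>i. cnj (u$i) * u$i - (cnj (v$i) * u$i) * cc - (cnj (u$i) * v$i) * cnj cc + cnj (v$i) * v$i"])
     apply (simp add: algebra_simps)
    apply (simp only: sum.distrib sum_subtractf sum_distrib_right)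
    done
  also have "\<dots> = ip u u - ip v u * cc - ip u v * cnj cc + ip v v"
    by (simp add: ip_def dims)
  also have "\<dots> = 2 * of_real ss" by (simp add: uu vv vu cc_sq cc_sq2 algebra_simps)
  finally show ?thesis .
qed

lemma ev_DD:
  assumes ev: "eigenvalue (DD * DD) a"
  shows "a * a = of_real ss * a"
proof -
  let ?M = "DD * DD"
  have cM: "?M \<in> carrier_mat N N" using D_carrier by auto
  from ev obtain w where w: "eigenvector ?M w a" unfolding eigenvalue_def by blast
  hence wc: "w \<in> carrier_vec N" and wnz: "w \<noteq> 0\<^sub>v N" and Mw: "?M *\<^sub>v w = a \<cdot>\<^sub>v w"
    using cM unfolding eigenvector_def by auto
  have Mv: "?M *\<^sub>v y = DD *\<^sub>v (DD *\<^sub>v y)" if "y \<in> carrier_vec N" for y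
    using D_carrier that by simp
  have "?M *\<^sub>v (?M *\<^sub>v w) = DD *\<^sub>v (DD *\<^sub>v (DD *\<^sub>v (DD *\<^sub>v w)))"
    using wc cM Mv Dy_carrier by (simp add: Mv)
  also have "\<dots> = of_real ss \<cdot>\<^sub>v (DD *\<^sub>v (DD *\<^sub>v w))" by (rule DDD[OF Dy_carrier[OF wc]])
  also have "\<dots> = of_real ss \<cdot>\<^sub>v (a \<cdot>\<^sub>v w)" using Mv[OF wc] Mw by simp
  finally have e1: "?M *\<^sub>v (?M *\<^sub>v w) = (of_real ss * a) \<cdot>\<^sub>v w" by (simp add: smult_smult_assoc)
  have "?M *\<^sub>v (?M *\<^sub>v w) = a \<cdot>\<^sub>v (a \<cdot>\<^sub>v w)" using Mw mult_mat_vec[OF cM wc] by simp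
  hence e2: "?M *\<^sub>v (?M *\<^sub>v w) = (a * a) \<cdot>\<^sub>v w" by (simp add: smult_smult_assoc)
  from wnz wc obtain i where i: "i < N" and wi: "w $ i \<noteq> 0" by (metis carrier_vecD eq_vecI index_zero_vec)
  have "(a * a) * w $ i = (of_real ss * a) * w $ i"
  proof -
    have eq: "(a * a) \<cdot>\<^sub>v w = (of_real ss * a) \<cdot>\<^sub>v w" using e1 e2 by simp
    show ?thesis using arg_cong[OF eq, of "\<lambda>x. x $ i"] i wc by simp
  qed
  thus ?thesis using wi by simp
qed

lemma trace_norm_D: "trace_norm DD = 2 * sqrt ss"
proof -
  let ?M = "DD * DD"
  have cM: "?M \<in> carrier_mat N N" using D_carrier by auto
  obtain es where es: "char_poly ?M = (\<Prod>a\<leftarrow>es. [:- a, 1:])"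
    using char_poly_factorized[OF cM] by blast
  obtain n_as where jnf: "jordan_nf ?M n_as" using jordan_nf_exists[OF cM es] by blast
  let ?J = "jordan_matrix n_as"
  have sim: "similar_mat ?M ?J" using jnf unfolding jordan_nf_def by simp
  from similar_matD[OF sim] obtain n where "{?M, ?J} \<subseteq> carrier_mat n n" by blast
  hence cJ: "?J \<in> carrier_mat N N" using cM by auto
  have ut: "upper_triangular ?J"
    unfolding upper_triangular_def using jordan_matrix_upper_triangular by auto
  let ?L = "diag_mat ?J"
  have cp: "char_poly ?M = (\<Prod>a\<leftarrow>?L. [:- a, 1:])"
    using char_poly_similar[OF sim] char_poly_upper_triangular[OF cJ ut] by simp
  have pr: "proots (char_poly ?M) = mset ?L" using cp proots_lin by simp
  have trL: "sum_list ?L = 2 * of_real ss"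
    using tr_similar[OF sim] tr_diag[of ?J] tr_DD by simp
  have setL: "set ?L \<subseteq> {0, of_real ss}"
  proof
    fix a assume a: "a \<in> set ?L"
    have "poly (char_poly ?M) a = 0" unfolding cp using a
      by (auto simp: poly_prod_list prod_list_zero_iff)
    hence "eigenvalue ?M a" using eigenvalue_root_char_poly[OF cM] by simp
    hence "a * a = of_real ss * a" by (rule ev_DD)
    hence "a * (a - of_real ss) = 0" by (simp add: algebra_simps)
    thus "a \<in> {0, of_real ss}" by auto
  qed
  let ?k = "length (filter (\<lambda>y. y = complex_of_real ss) ?L)"
  have s1: "sum_list ?L = of_nat ?k * of_real ss"
    using count_sum[OF setL, of id] by simp
  have sm: "sum_mset (image_mset (\<lambda>\<mu>. sqrt (Re \<mu>)) (mset ?L)) = sum_list (map (\<lambda>\<mu>. sqrt (Re \<mu>)) ?L)"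
    by (simp only: mset_map[symmetric] sum_mset_sum_list)
  have tn: "trace_norm DD = of_nat ?k * sqrt ss"
    unfolding trace_norm_def cadj_D pr sm
    using count_sum[OF setL, of "\<lambda>\<mu>. sqrt (Re \<mu>)"] by simp
  show ?thesis
  proof (cases "ss = 0")
    case True thus ?thesis using tn by simp
  next
    case False
    have "of_nat ?k * complex_of_real ss = 2 * of_real ss" using s1 trL by simp
    moreover have "complex_of_real ss \<noteq> 0" using False of_real_eq_0_iff by blast
    ultimately have "(of_nat ?k :: complex) = of_nat 2" by (rule cancel_aux)
    hence "?k = 2" by (simp only: of_nat_eq_iff)
    thus ?thesis using tn by simp
  qed
qed

end



definition rr :: "complex \<Rightarrow> real" where "rr x = sqrt (1 + (cmod x)^2)"

lemma rr_pos: "rr x > 0" unfolding rr_def by (simp add: add_pos_nonneg)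

lemma prod_state_idx: "j < 2 ^ length z \<Longrightarrow> prod_state z $ j = (\<Prod>i<length z. (if bit j i then z ! i else 1) / complex_of_real (rr (z!i)))"
  by (simp add: prod_state_def rr_def)

lemma prod_state_carrier: "prod_state z \<in> carrier_vec (2 ^ length z)"
  by (simp add: prod_state_def)

lemma ip_prod_state:
  assumes "length z = length a"
  shows "ip (prod_state z) (prod_state a) = (\<Prod>i<length z. (1 + cnj (z!i) * a!i) / complex_of_real (rr (z!i) * rr (a!i)))"
proof -
  let ?g = "\<lambda>i b. cnj ((if b then z ! i else 1) / complex_of_real (rr (z!i))) * ((if b then a ! i else 1) / complex_of_real (rr (a!i)))"
  have "ip (prod_state z) (prod_state a) = (\<Sum>j::nat<2^length z. \<Prod>i<length z. ?g i (bit j i))"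
    unfolding ip_def using assms
    by (intro sum.cong) (auto simp: prod_state_def prod_state_idx rr_def prod.distrib[symmetric])
  also have "\<dots> = (\<Prod>i<length z. ?g i False + ?g i True)" by (rule bit_sum_prod)
  also have "\<dots> = (\<Prod>i<length z. (1 + cnj (z!i) * a!i) / complex_of_real (rr (z!i) * rr (a!i)))"
    by (intro prod.cong) (auto simp: add_divide_distrib mult.commute)
  finally show ?thesis .
qed

lemma ip_prod_state_self: "ip (prod_state z) (prod_state z) = 1"
proof -
  have "ip (prod_state z) (prod_state z) = (\<Prod>i<length z. (1 + cnj (z!i) * z!i) / complex_of_real (rr (z!i) * rr (z!i)))"
    by (rule ip_prod_state) simp
  also have "\<dots> = (\<Prod>i<length z. 1)"
  proof (intro prod.cong refl)
    fix i
    have "complex_of_real (rr (z!i) * rr (z!i)) = 1 + cnj (z!i) * z!i"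
      unfolding rr_def by (simp add: complex_norm_square[symmetric] mult.commute)
    moreover have "complex_of_real (rr (z!i) * rr (z!i)) \<noteq> 0" using rr_pos[of "z!i"] by simp
    ultimately show "(1 + cnj (z!i) * z!i) / complex_of_real (rr (z!i) * rr (z!i)) = 1" by simp
  qed
  finally show ?thesis by simp
qed

lemma lagrange: fixes z a :: complex
  shows "(cmod (1 + cnj z * a))^2 + (cmod (z - a))^2 = (1 + (cmod z)^2) * (1 + (cmod a)^2)"
  unfolding cmod_power2 by (simp add: algebra_simps power2_eq_square)

lemma one_minus_prod:
  fixes q :: "nat \<Rightarrow> real"
  assumes "\<And>i. i < n \<Longrightarrow> 0 \<le> q i \<and> q i \<le> 1"
  shows "1 - (\<Prod>i<n. q i) \<le> (\<Sum>i<n. 1 - q i)"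
  using assms
proof (induction n)
  case 0 thus ?case by simp
next
  case (Suc n)
  have IH: "1 - (\<Prod>i<n. q i) \<le> (\<Sum>i<n. 1 - q i)" using Suc by simp
  have p: "0 \<le> (\<Prod>i<n. q i)" "(\<Prod>i<n. q i) \<le> 1" using Suc.prems
    by (auto intro: prod_nonneg prod_le_1)
  have qn: "0 \<le> q n" "q n \<le> 1" using Suc.prems by auto
  have "1 - (\<Prod>i<Suc n. q i) = (1 - (\<Prod>i<n. q i)) + (\<Prod>i<n. q i) * (1 - q n)"
    by (simp add: algebra_simps)
  also have "\<dots> \<le> (\<Sum>i<n. 1 - q i) + 1 * (1 - q n)"
    using IH p qn by (intro add_mono mult_mono) auto
  finally show ?case by simp
qed




lemma rr_norm: "cmod (complex_of_real (rr x)) = rr x"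
  using rr_pos[of x] by simp

lemma ss_bound:
  assumes len: "length z = length a"
    and nz: "\<And>i. i < length z \<Longrightarrow> 1 + cnj (z ! i) * a ! i \<noteq> 0"
  shows "1 - (cmod (ip (prod_state z) (prod_state a)))^2
         \<le> (\<Sum>i<length z. (cmod ((z ! i - a ! i) / (1 + cnj (z ! i) * a ! i)))\<^sup>2)"
proof -
  define q where "q i = (cmod (1 + cnj (z!i) * a!i))^2 / ((1 + (cmod (z!i))^2) * (1 + (cmod (a!i))^2))" for i
  have P: "(1 + (cmod (z!i))^2) * (1 + (cmod (a!i))^2) > 0" for i
    by (simp add: add_pos_nonneg)
  have c2: "(cmod (ip (prod_state z) (prod_state a)))^2 = (\<Prod>i<length z. q i)"
  proof -
    have "cmod (ip (prod_state z) (prod_state a)) = (\<Prod>i<length z. cmod (1 + cnj (z!i) * a!i) / (rr (z!i) * rr (a!i)))"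
      unfolding ip_prod_state[OF len] prod_norm[symmetric]
      using rr_pos by (intro prod.cong refl) (simp add: norm_divide norm_mult rr_norm abs_of_pos)
    hence "(cmod (ip (prod_state z) (prod_state a)))^2 = (\<Prod>i<length z. (cmod (1 + cnj (z!i) * a!i) / (rr (z!i) * rr (a!i)))^2)"
      by (simp add: prod_power_distrib)
    also have "\<dots> = (\<Prod>i<length z. q i)"
      by (intro prod.cong refl) (simp add: q_def rr_def power_divide power_mult_distrib)
    finally show ?thesis .
  qed
  have qb: "0 \<le> q i \<and> q i \<le> 1" for i
  proof -
    have X: "(cmod (1 + cnj (z!i) * a!i))^2 \<le> (1 + (cmod (z!i))^2) * (1 + (cmod (a!i))^2)"
      using lagrange[of "z!i" "a!i"] zero_le_power2[of "cmod (z!i - a!i)"] by linarith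
    show ?thesis unfolding q_def using X P[of i] by (auto simp: divide_le_eq_1_pos)
  qed
  have "1 - (cmod (ip (prod_state z) (prod_state a)))^2 \<le> (\<Sum>i<length z. 1 - q i)"
    unfolding c2 by (rule one_minus_prod) (use qb in auto)
  also have "\<dots> \<le> (\<Sum>i<length z. (cmod ((z ! i - a ! i) / (1 + cnj (z ! i) * a ! i)))\<^sup>2)"
  proof (intro sum_mono)
    fix i assume i: "i \<in> {..<length z}"
    have den: "(cmod (1 + cnj (z!i) * a!i))^2 > 0" using nz i by simp
    have le: "(cmod (1 + cnj (z!i) * a!i))^2 \<le> (1 + (cmod (z!i))^2) * (1 + (cmod (a!i))^2)"
      using lagrange[of "z!i" "a!i"] zero_le_power2[of "cmod (z!i - a!i)"] by linarith
    have "1 - q i = (cmod (z!i - a!i))^2 / ((1 + (cmod (z!i))^2) * (1 + (cmod (a!i))^2))"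
      using lagrange[of "z!i" "a!i"] P[of i] unfolding q_def by (simp add: field_simps)
    also have "\<dots> \<le> (cmod (z!i - a!i))^2 / (cmod (1 + cnj (z!i) * a!i))^2"
      by (rule divide_left_mono) (use le den P[of i] in \<open>auto intro: mult_pos_pos\<close>)
    also have "\<dots> = (cmod ((z ! i - a ! i) / (1 + cnj (z ! i) * a ! i)))\<^sup>2"
      by (simp add: norm_divide power_divide)
    finally show "1 - q i \<le> (cmod ((z ! i - a ! i) / (1 + cnj (z ! i) * a ! i)))\<^sup>2" .
  qed
  finally show ?thesis .
qed

theorem corollary3p7:
  fixes z a :: "complex list"
  assumes "length z = length a"
  shows "trace_norm (proj (prod_state z) - proj (prod_state a)) / 2
           = op_norm (proj (prod_state z) - proj (prod_state a))
       \<and> ereal (op_norm (proj (prod_state z) - proj (prod_state a))) \<le> d_tan z a"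
proof -
  have uc: "prod_state z \<in> carrier_vec (2 ^ length z)" by (rule prod_state_carrier)
  have vc: "prod_state a \<in> carrier_vec (2 ^ length z)" using prod_state_carrier[of a] assms by simp
  note uu = ip_prod_state_self[of z] and vv = ip_prod_state_self[of a]
  note op = op_norm_D[OF uc vc uu vv]
  note tn = trace_norm_D[OF uc vc uu vv]
  have "ereal (sqrt (1 - (cmod (ip (prod_state z) (prod_state a)))^2)) \<le> d_tan z a"
  proof (cases "\<exists>i<length z. 1 + cnj (z ! i) * a ! i = 0")
    case True thus ?thesis by (simp add: d_tan_def)
  next
    case False
    hence "sqrt (1 - (cmod (ip (prod_state z) (prod_state a)))^2)
         \<le> sqrt (\<Sum>i<length z. (cmod ((z ! i - a ! i) / (1 + cnj (z ! i) * a ! i)))\<^sup>2)"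
      using ss_bound[OF assms] by (intro real_sqrt_le_mono) blast
    thus ?thesis using False by (simp add: d_tan_def)
  qed
  thus ?thesis using op tn by simp
qed


end
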